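(* Let $G=(V,E)$ be a finite simple graph of order $n$ and let $T=n-1$. If $(s,x,y,z)$ is an optimal solution of the integer program with the constraints of the Infection Model $\mathrm{IM}(G,T)$ and objective "minimize $\sum_{v\in V}s_v+z$", then $C=\{v\in V\colon s_v=1\}$ is a zero forcing set of $G$ with $\mathrm{th}(G)=\mathrm{th}(G,C)=\sum_{v\in V}s_v+z$.
   Context: Zero forcing: under the standard color change rule a filled vertex $u$ can force a non-filled vertex $v$ if $v$ is the only non-filled neighbor of $u$; $C\subseteq V$ is a zero forcing set if, starting with $C$ filled and repeatedly forcing, all of $V$ becomes filled. The propagation time $\mathrm{pt}(G,C)$ is the smallest $t^*$ such that, starting from $C^{[0]}=C$ and setting $C^{[t]}=C^{[t-1]}\cup\{v\notin C^{[t-1]}\colon$ some $u\in C^{[t-1]}$ has $v$ as its only neighbor outside $C^{[t-1]}\}$, one has $C^{[t^*]}=V$ ($\infty$ if $C$ is not a zero forcing set). The throttling number of $C$ is $\mathrm{th}(G,C)=|C|+\mathrm{pt}(G,C)$ and $\mathrm{th}(G)=\min_{C\subseteq V}\mathrm{th}(G,C)$. $N(u)$ is the neighborhood of $u$. Infection Model constraints: let $A$ be the set of arcs containing both $(u,v)$ and $(v,u)$ for each edge $\{u,v\}\in E$. Variables $s_v\in\{0,1\}$ and $x_v\in\{0,1,\dots,T\}$ for $v\in V$, $y_a\in\{0,1\}$ for $a\in A$, and $z\in\{0,1,\dots,T\}$, subject to: (i) $s_v+\sum_{a=(u,v)\in A}y_a=1$ for all $v\in V$; (ii) $x_u-x_v+(T+1)y_a\leq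 T$ for all $a=(u,v)\in A$; (iii) $x_w-x_v+(T+1)y_a\leq T$ for all $a=(u,v)\in A$ and $w\in N(u)\setminus\{v\}$; (iv) $x_v-z\leq 0$ for all $v\in V$. *)

theory Defs
  imports Main "HOL-Library.Extended_Nat"
begin

definition simple_graph :: "'a set \<Rightarrow> ('a \<Rightarrow> 'a \<Rightarrow> bool) \<Rightarrow> bool" where
  "simple_graph V E \<longleftrightarrow> finite V \<and> (\<forall>u v. E u v \<longrightarrow> u \<in> V \<and> v \<in> V)
     \<and> (\<forall>u v. E u v \<longrightarrow> E v u) \<and> (\<forall>u. \<not> E u u)"

definition nbhd :: "'a set \<Rightarrow> ('a \<Rightarrow> 'a \<Rightarrow> bool) \<Rightarrow> 'a \<Rightarrow> 'a set" where
  "nbhd V E u = {v \<in> V. E u v}"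

inductive filled :: "'a set \<Rightarrow> ('a \<Rightarrow> 'a \<Rightarrow> bool) \<Rightarrow> 'a set \<Rightarrow> 'a \<Rightarrow> bool"
  for V E C where
  init: "v \<in> C \<Longrightarrow> filled V E C v"
| force: "filled V E C u \<Longrightarrow> v \<in> nbhd V E u \<Longrightarrow>
          (\<forall>w \<in> nbhd V E u - {v}. filled V E C w) \<Longrightarrow> filled V E C v"

definition zero_forcing_set :: "'a set \<Rightarrow> ('a \<Rightarrow> 'a \<Rightarrow> bool) \<Rightarrow> 'a set \<Rightarrow> bool" where
  "zero_forcing_set V E C \<longleftrightarrow> C \<subseteq> V \<and> (\<forall>v \<in> V. filled V E C v)"

text \<open>One parallel propagation step: C^[t] from C^[t-1].\<close>
definition zf_step :: "'a set \<Rightarrow> ('a \<Rightarrow> 'a \<Rightarrow> bool) \<Rightarrow> 'a set \<Rightarrow> 'a set" where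
  "zf_step V E D = D \<union> {v. v \<notin> D \<and> (\<exists>u \<in> D. nbhd V E u - D = {v})}"

definition pt :: "'a set \<Rightarrow> ('a \<Rightarrow> 'a \<Rightarrow> bool) \<Rightarrow> 'a set \<Rightarrow> enat" where
  "pt V E C = (if \<exists>t. (zf_step V E ^^ t) C = V
               then enat (LEAST t. (zf_step V E ^^ t) C = V) else \<infinity>)"

definition th_set :: "'a set \<Rightarrow> ('a \<Rightarrow> 'a \<Rightarrow> bool) \<Rightarrow> 'a set \<Rightarrow> enat" where
  "th_set V E C = enat (card C) + pt V E C"

definition th :: "'a set \<Rightarrow> ('a \<Rightarrow> 'a \<Rightarrow> bool) \<Rightarrow> enat" where
  "th V E = (INF C \<in> Pow V. th_set V E C)"

definition arcs :: "'a set \<Rightarrow> ('a \<Rightarrow> 'a \<Rightarrow> bool) \<Rightarrow> ('a \<times> 'a) set" where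
  "arcs V E = {(u, v). u \<in> V \<and> v \<in> V \<and> E u v}"

definition IM_feasible :: "'a set \<Rightarrow> ('a \<Rightarrow> 'a \<Rightarrow> bool) \<Rightarrow> nat \<Rightarrow>
    ('a \<Rightarrow> int) \<Rightarrow> ('a \<Rightarrow> int) \<Rightarrow> ('a \<times> 'a \<Rightarrow> int) \<Rightarrow> int \<Rightarrow> bool" where
  "IM_feasible V E T s x y z \<longleftrightarrow>
     (\<forall>v \<in> V. s v \<in> {0, 1} \<and> x v \<in> {0 .. int T}) \<and>
     (\<forall>a \<in> arcs V E. y a \<in> {0, 1}) \<and> z \<in> {0 .. int T} \<and>
     (\<forall>v \<in> V. s v + (\<Sum>a \<in> {a \<in> arcs V E. snd a = v}. y a) = 1) \<and>
     (\<forall>(u, v) \<in> arcs V E. x u - x v + (int T + 1) * y (u, v) \<le> int T) \<and>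
     (\<forall>(u, v) \<in> arcs V E. \<forall>w \<in> nbhd V E u - {v}.
         x w - x v + (int T + 1) * y (u, v) \<le> int T) \<and>
     (\<forall>v \<in> V. x v - z \<le> 0)"

definition IM_objective :: "'a set \<Rightarrow> ('a \<Rightarrow> int) \<Rightarrow> int \<Rightarrow> int" where
  "IM_objective V s z = (\<Sum>v \<in> V. s v) + z"

definition IM_optimal :: "'a set \<Rightarrow> ('a \<Rightarrow> 'a \<Rightarrow> bool) \<Rightarrow> nat \<Rightarrow>
    ('a \<Rightarrow> int) \<Rightarrow> ('a \<Rightarrow> int) \<Rightarrow> ('a \<times> 'a \<Rightarrow> int) \<Rightarrow> int \<Rightarrow> bool" where
  "IM_optimal V E T s x y z \<longleftrightarrow> IM_feasible V E T s x y z \<and>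
     (\<forall>s' x' y' z'. IM_feasible V E T s' x' y' z' \<longrightarrow>
        IM_objective V s z \<le> IM_objective V s' z')"

end

theory Submission
  imports Defs
begin

lemma zf_step_sup: "D \<subseteq> zf_step V E D"
  unfolding zf_step_def by blast

lemma zf_step_sub: "D \<subseteq> V \<Longrightarrow> zf_step V E D \<subseteq> V"
  unfolding zf_step_def nbhd_def by blast

lemma iter_sub: "C \<subseteq> V \<Longrightarrow> (zf_step V E ^^ t) C \<subseteq> V"
  by (induction t) (auto dest: zf_step_sub[of _ V E])

lemma iter_filled: "v \<in> (zf_step V E ^^ t) C \<Longrightarrow> filled V E C v"
proof (induction t arbitrary: v)
  case 0
  then show ?case by (simp add: filled.init)
next
  case (Suc t)
  let ?D = "(zf_step V E ^^ t) C"
  have "v \<in> zf_step V E ?D" using Suc.prems by simp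
  then consider "v \<in> ?D" | u where "u \<in> ?D" "nbhd V E u - ?D = {v}"
    unfolding zf_step_def by blast
  then show ?case
  proof cases
    case 1 then show ?thesis using Suc.IH by blast
  next
    case 2
    have vN: "v \<in> nbhd V E u" using 2(2) by auto
    have wF: "\<forall>w \<in> nbhd V E u - {v}. filled V E C w"
    proof
      fix w assume "w \<in> nbhd V E u - {v}"
      then have "w \<in> ?D" using 2(2) by auto
      then show "filled V E C w" by (rule Suc.IH)
    qed
    show ?thesis by (rule filled.force[OF Suc.IH[OF 2(1)] vN wF])
  qed
qed

lemma iter_mono_C: "C \<subseteq> (zf_step V E ^^ t) C"
  by (induction t) (auto simp: zf_step_def)

lemma fixed_iter: "zf_step V E D = D \<Longrightarrow> (zf_step V E ^^ k) D = D"
  by (induction k) auto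

lemma incoming:
  assumes feas: "IM_feasible V E T s x y z" and v: "v \<in> V" and sv: "s v \<noteq> 1"
  shows "\<exists>u. (u, v) \<in> arcs V E \<and> y (u, v) = 1"
proof -
  have s0: "s v = 0" using feas v sv unfolding IM_feasible_def by auto
  have "(\<Sum>a \<in> {a \<in> arcs V E. snd a = v}. y a) = 1"
    using feas v s0 unfolding IM_feasible_def by auto
  then obtain a where a: "a \<in> {a \<in> arcs V E. snd a = v}" "y a \<noteq> 0"
    by (metis (no_types, lifting) sum.neutral zero_neq_one)
  then have "y a = 1" using feas unfolding IM_feasible_def by auto
  with a show ?thesis by (cases a) auto
qed

lemma feasible_reach:
  assumes feas: "IM_feasible V E T s x y z"
  shows "\<forall>v\<in>V. x v \<le> int n \<longrightarrow> v \<in> (zf_step V E ^^ n) {v\<in>V. s v = 1}"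
proof (induction n)
  case 0
  show ?case
  proof (intro ballI impI)
    fix v assume v: "v \<in> V" and xv: "x v \<le> int 0"
    show "v \<in> (zf_step V E ^^ 0) {v\<in>V. s v = 1}"
    proof (cases "s v = 1")
      case True then show ?thesis using v by simp
    next
      case False
      then obtain u where u: "(u, v) \<in> arcs V E" "y (u, v) = 1"
        using incoming[OF feas v] by blast
      have "x u - x v + (int T + 1) * y (u, v) \<le> int T"
        using feas u(1) unfolding IM_feasible_def by blast
      moreover have "x u \<ge> 0" using feas u(1) unfolding IM_feasible_def arcs_def by auto
      ultimately show ?thesis using u xv by simp
    qed
  qed
next
  case (Suc n)
  let ?D = "(zf_step V E ^^ n) {v\<in>V. s v = 1}"
  show ?case
  proof (intro ballI impI)
    fix v assume v: "v \<in> V" and xv: "x v \<le> int (Suc n)"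
    show "v \<in> (zf_step V E ^^ Suc n) {v\<in>V. s v = 1}"
    proof (cases "s v = 1")
      case True
      have "{v\<in>V. s v = 1} \<subseteq> (zf_step V E ^^ Suc n) {v\<in>V. s v = 1}"
        by (rule iter_mono_C)
      then show ?thesis using True v by blast
    next
      case False
      then obtain u where u: "(u, v) \<in> arcs V E" "y (u, v) = 1"
        using incoming[OF feas v] by blast
      have "x u - x v + (int T + 1) * y (u, v) \<le> int T"
        using feas u(1) unfolding IM_feasible_def by blast
      then have xu: "x u \<le> int n" using u xv by simp
      have uV: "u \<in> V" using u(1) unfolding arcs_def by auto
      have uD: "u \<in> ?D" using Suc.IH uV xu by blast
      have wD: "w \<in> ?D" if w: "w \<in> nbhd V E u - {v}" for w
      proof -
        have "x w - x v + (int T + 1) * y (u, v) \<le> int T"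
          using feas u(1) w unfolding IM_feasible_def by blast
        then have "x w \<le> int n" using u xv by simp
        moreover have "w \<in> V" using w unfolding nbhd_def by auto
        ultimately show ?thesis using Suc.IH by blast
      qed
      have vN: "v \<in> nbhd V E u" using u(1) unfolding arcs_def nbhd_def by auto
      have "v \<in> zf_step V E ?D"
      proof (cases "v \<in> ?D")
        case True then show ?thesis by (meson subsetD zf_step_sup)
      next
        case False
        have eq: "nbhd V E u - ?D = {v}"
        proof
          show "nbhd V E u - ?D \<subseteq> {v}" using wD by blast
          show "{v} \<subseteq> nbhd V E u - ?D" using False vN by blast
        qed
        have "v \<in> {v. v \<notin> ?D \<and> (\<exists>u \<in> ?D. nbhd V E u - ?D = {v})}"
          using False uD eq by blast
        then show ?thesis unfolding zf_step_def by (rule UnI2)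
      qed
      then show ?thesis by simp
    qed
  qed
qed

lemma construct:
  assumes sg: "simple_graph V E" and CV: "C \<subseteq> V"
    and reach: "(zf_step V E ^^ p) C = V"
    and minimal: "\<forall>t<p. (zf_step V E ^^ t) C \<noteq> V"
  shows "\<exists>s x y z. IM_feasible V E (card V - 1) s x y z \<and> IM_objective V s z = int (card C) + int p"
proof -
  let ?it = "\<lambda>t. (zf_step V E ^^ t) C"
  have finV: "finite V" using sg unfolding simple_graph_def by blast
  have itV: "?it t \<subseteq> V" for t using iter_sub[OF CV] by blast
  have card_grow: "t \<le> p \<Longrightarrow> card C + t \<le> card (?it t)" for t
  proof (induction t)
    case 0 show ?case by simp
  next
    case (Suc t)
    have sub: "?it t \<subseteq> ?it (Suc t)" using zf_step_sup by simp
    have ne: "?it (Suc t) \<noteq> ?it t"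
    proof
      assume eq: "?it (Suc t) = ?it t"
      then have "zf_step V E (?it t) = ?it t" by simp
      then have a: "(zf_step V E ^^ (p - t)) (?it t) = ?it t" by (rule fixed_iter)
      have "p = (p - t) + t" using Suc.prems by simp
      then have "?it p = (zf_step V E ^^ (p - t)) (?it t)" by (metis funpow_add o_apply)
      with a reach have "?it t = V" by simp
      moreover have "t < p" using Suc.prems by simp
      ultimately show False using minimal by blast
    qed
    have "finite (?it (Suc t))" using itV finV by (meson finite_subset)
    then have "card (?it t) < card (?it (Suc t))" using sub ne by (intro psubset_card_mono) auto
    then show ?case using Suc by simp
  qed
  have pbound: "p \<le> card V - 1"
  proof (cases "C = {}")
    case True
    have "zf_step V E {} = {}" unfolding zf_step_def by simp
    then have "?it p = {}" using True fixed_iter by metis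
    then have "V = {}" using reach by simp
    then show ?thesis using card_grow[of p] reach by simp
  next
    case False
    then have "card C \<ge> 1" using finV CV by (meson card_0_eq finite_subset less_one not_le)
    then show ?thesis using card_grow[of p] reach by simp
  qed
  define lt where "lt v = (LEAST t. v \<in> ?it t)" for v
  have lt_in: "v \<in> ?it (lt v)" if "v \<in> V" for v
    unfolding lt_def by (rule LeastI[of "\<lambda>t. v \<in> ?it t" p]) (use reach that in simp)
  have lt_le: "v \<in> ?it t \<Longrightarrow> lt v \<le> t" for v t unfolding lt_def by (rule Least_le)
  have lt_p: "v \<in> V \<Longrightarrow> lt v \<le> p" for v using lt_le[of v p] reach by simp
  have ltpos: "v \<in> V \<Longrightarrow> v \<notin> C \<Longrightarrow> lt v \<noteq> 0" for v using lt_in[of v] by (metis funpow_0)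
  have forcer: "\<exists>u. u \<in> ?it (lt v - 1) \<and> nbhd V E u - ?it (lt v - 1) = {v}"
    if v: "v \<in> V" "v \<notin> C" for v
  proof -
    obtain k where k: "lt v = Suc k" using ltpos[OF v] not0_implies_Suc by blast
    have "v \<in> zf_step V E (?it k)" using lt_in[OF v(1)] k by simp
    moreover have "v \<notin> ?it k" using lt_le[of v k] k by auto
    ultimately show ?thesis unfolding zf_step_def using k by auto
  qed
  define f where "f v = (SOME u. u \<in> ?it (lt v - 1) \<and> nbhd V E u - ?it (lt v - 1) = {v})" for v
  have f: "f v \<in> ?it (lt v - 1) \<and> nbhd V E (f v) - ?it (lt v - 1) = {v}"
    if "v \<in> V" "v \<notin> C" for v
    unfolding f_def by (rule someI_ex) (rule forcer[OF that])
  have fV: "f v \<in> V" if "v \<in> V" "v \<notin> C" for v using f[OF that] itV by blast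
  have fE: "v \<in> nbhd V E (f v)" if "v \<in> V" "v \<notin> C" for v using f[OF that] by blast
  have fx: "lt (f v) + 1 \<le> lt v" if "v \<in> V" "v \<notin> C" for v
    using f[OF that] lt_le[of "f v" "lt v - 1"] ltpos[OF that] by simp
  have fw: "lt w + 1 \<le> lt v" if "v \<in> V" "v \<notin> C" "w \<in> nbhd V E (f v) - {v}" for v w
  proof -
    have "w \<in> ?it (lt v - 1)" using f[OF that(1,2)] that(3) by blast
    then show ?thesis using lt_le[of w "lt v - 1"] ltpos[OF that(1,2)] by simp
  qed
  define s where "s v = (if v \<in> C then 1 else 0::int)" for v
  define x where "x v = int (lt v)" for v
  define y where "y = (\<lambda>(a,b). if b \<in> V \<and> b \<notin> C \<and> a = f b then 1 else 0::int)"
  define z where "z = int p"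
  define T where "T = card V - 1"
  have xT: "v \<in> V \<Longrightarrow> x v \<le> int T" for v using lt_p pbound unfolding x_def T_def by fastforce
  have x0: "x v \<ge> 0" for v unfolding x_def by simp
  have c1: "\<forall>v \<in> V. s v \<in> {0, 1} \<and> x v \<in> {0 .. int T}" using xT x0 unfolding s_def by auto
  have c2: "\<forall>a \<in> arcs V E. y a \<in> {0, 1}" unfolding y_def by auto
  have c3: "z \<in> {0 .. int T}" using pbound unfolding z_def T_def by auto
  have c4: "\<forall>v \<in> V. s v + (\<Sum>a \<in> {a \<in> arcs V E. snd a = v}. y a) = 1"
  proof
    fix v assume v: "v \<in> V"
    show "s v + (\<Sum>a \<in> {a \<in> arcs V E. snd a = v}. y a) = 1"
    proof (cases "v \<in> C")
      case True
      have "(\<Sum>a \<in> {a \<in> arcs V E. snd a = v}. y a) = 0"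
        by (rule sum.neutral) (auto simp: y_def True)
      then show ?thesis using True s_def by simp
    next
      case False
      have fin: "finite {a \<in> arcs V E. snd a = v}"
        by (rule finite_subset[of _ "V \<times> V"]) (auto simp: arcs_def finV)
      have "(\<Sum>a \<in> {a \<in> arcs V E. snd a = v}. y a)
          = (\<Sum>a \<in> {a \<in> arcs V E. snd a = v}. if a = (f v, v) then 1 else 0)"
        by (rule sum.cong) (auto simp: y_def v False split: if_splits)
      also have "\<dots> = 1" using fin fV[OF v False] fE[OF v False] v
        by (subst sum.delta) (auto simp: arcs_def nbhd_def)
      finally show ?thesis using False s_def by simp
    qed
  qed
  have c5: "\<forall>(u, v) \<in> arcs V E. x u - x v + (int T + 1) * y (u, v) \<le> int T"
  proof (clarify)
    fix u v assume a: "(u, v) \<in> arcs V E"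
    have uv: "u \<in> V" "v \<in> V" using a unfolding arcs_def by auto
    show "x u - x v + (int T + 1) * y (u, v) \<le> int T"
    proof (cases "v \<notin> C \<and> u = f v")
      case True
      then show ?thesis using fx[of v] uv unfolding x_def y_def by auto
    next
      case False
      then show ?thesis using xT[OF uv(1)] x0[of v] unfolding y_def by auto
    qed
  qed
  have c6': "x w - x v + (int T + 1) * y (u, v) \<le> int T"
    if a: "(u, v) \<in> arcs V E" and w0: "w \<in> nbhd V E u - {v}" for u v w
  proof -
    have w: "w \<in> nbhd V E u" "w \<noteq> v" using w0 by auto
    have uv: "u \<in> V" "v \<in> V" using a unfolding arcs_def by auto
    have wV: "w \<in> V" using w unfolding nbhd_def by auto
    show ?thesis
    proof (cases "v \<notin> C \<and> u = f v")
      case True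
      then show ?thesis using fw[of v w] uv w unfolding x_def y_def by auto
    next
      case False
      then show ?thesis using xT[OF wV] x0[of v] unfolding y_def by auto
    qed
  qed
  have c6: "\<forall>(u, v) \<in> arcs V E. \<forall>w \<in> nbhd V E u - {v}.
         x w - x v + (int T + 1) * y (u, v) \<le> int T"
    using c6' by blast
  have c7: "\<forall>v \<in> V. x v - z \<le> 0" using lt_p unfolding x_def z_def by auto
  have feas: "IM_feasible V E T s x y z"
    unfolding IM_feasible_def using c1 c2 c3 c4 c5 c6 c7 by blast
  have "(\<Sum>v \<in> V. s v) = (\<Sum>v \<in> V \<inter> C. 1)"
    unfolding s_def using sum.inter_restrict[OF finV, of "\<lambda>_. (1::int)" C] by simp
  also have "V \<inter> C = C" using CV by blast
  finally have "IM_objective V s z = int (card C) + int p"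
    unfolding IM_objective_def z_def by simp
  then show ?thesis using feas unfolding T_def by blast
qed

theorem corollary3p5:
  fixes V :: "'a set" and E :: "'a \<Rightarrow> 'a \<Rightarrow> bool"
    and s x :: "'a \<Rightarrow> int" and y :: "'a \<times> 'a \<Rightarrow> int" and z :: int
  assumes "simple_graph V E"
    and "IM_optimal V E (card V - 1) s x y z"
  shows "zero_forcing_set V E {v \<in> V. s v = 1}
    \<and> th V E = th_set V E {v \<in> V. s v = 1}
    \<and> th_set V E {v \<in> V. s v = 1} = enat (nat (IM_objective V s z))"
proof -
  let ?C = "{v \<in> V. s v = 1}"
  have sg: "simple_graph V E" by fact
  have feas: "IM_feasible V E (card V - 1) s x y z" using assms(2) unfolding IM_optimal_def by blast
  have opt: "\<And>s' x' y' z'. IM_feasible V E (card V - 1) s' x' y' z' \<Longrightarrow>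
        IM_objective V s z \<le> IM_objective V s' z'" using assms(2) unfolding IM_optimal_def by blast
  have finV: "finite V" using sg unfolding simple_graph_def by blast
  have z0: "z \<ge> 0" and xz: "\<forall>v\<in>V. x v \<le> z" using feas unfolding IM_feasible_def by auto
  have CV: "?C \<subseteq> V" by blast
  have reach: "(zf_step V E ^^ nat z) ?C = V"
  proof
    show "(zf_step V E ^^ nat z) ?C \<subseteq> V" by (rule iter_sub[OF CV])
    show "V \<subseteq> (zf_step V E ^^ nat z) ?C"
      using feasible_reach[OF feas, of "nat z"] xz z0 by auto
  qed
  have zfs: "zero_forcing_set V E ?C"
    unfolding zero_forcing_set_def using reach iter_filled[of _ "nat z" V E ?C] by blast
  have ptle: "pt V E ?C \<le> enat (nat z)"
  proof -
    have "\<exists>t. (zf_step V E ^^ t) ?C = V" using reach by blast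
    then have "pt V E ?C = enat (LEAST t. (zf_step V E ^^ t) ?C = V)" unfolding pt_def by simp
    also have "\<dots> \<le> enat (nat z)" using Least_le[of "\<lambda>t. (zf_step V E ^^ t) ?C = V" "nat z"] reach by simp
    finally show ?thesis .
  qed
  have "(\<Sum>v \<in> V. s v) = (\<Sum>v \<in> V. if v \<in> ?C then 1 else 0)"
    using feas unfolding IM_feasible_def by (intro sum.cong) auto
  also have "\<dots> = (\<Sum>v \<in> V \<inter> ?C. 1)"
    using sum.inter_restrict[OF finV, of "\<lambda>_. (1::int)" ?C] by simp
  also have "V \<inter> ?C = ?C" by blast
  finally have obj: "IM_objective V s z = int (card ?C) + z" unfolding IM_objective_def by simp
  have upper: "th_set V E ?C \<le> enat (nat (IM_objective V s z))"
  proof -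
    have "th_set V E ?C \<le> enat (card ?C) + enat (nat z)"
      unfolding th_set_def using ptle by (rule add_left_mono)
    also have "\<dots> = enat (nat (IM_objective V s z))" using obj z0 by (simp add: nat_add_distrib)
    finally show ?thesis .
  qed
  have lower: "enat (nat (IM_objective V s z)) \<le> th_set V E C" if C: "C \<in> Pow V" for C
  proof (cases "\<exists>t. (zf_step V E ^^ t) C = V")
    case True
    define p where "p = (LEAST t. (zf_step V E ^^ t) C = V)"
    have r: "(zf_step V E ^^ p) C = V" unfolding p_def using True by (rule LeastI_ex)
    have m: "\<forall>t<p. (zf_step V E ^^ t) C \<noteq> V" unfolding p_def using not_less_Least by blast
    obtain s' x' y' z' where f': "IM_feasible V E (card V - 1) s' x' y' z'"
      and o': "IM_objective V s' z' = int (card C) + int p"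
      using construct[OF sg _ r m] C by blast
    have "IM_objective V s z \<le> int (card C) + int p" using opt[OF f'] o' by simp
    then have "nat (IM_objective V s z) \<le> card C + p" by simp
    moreover have "th_set V E C = enat (card C + p)"
      unfolding th_set_def pt_def p_def using True by simp
    ultimately show ?thesis by simp
  next
    case False
    then show ?thesis unfolding th_set_def pt_def by simp
  qed
  have eq: "th_set V E ?C = enat (nat (IM_objective V s z))"
    using upper lower[of ?C] by auto
  have "th V E = th_set V E ?C"
    unfolding th_def
  proof (rule antisym)
    show "(INF C \<in> Pow V. th_set V E C) \<le> th_set V E ?C" by (rule INF_lower) auto
    show "th_set V E ?C \<le> (INF C \<in> Pow V. th_set V E C)"
      using lower eq by (auto intro: INF_greatest)
  qed
  then show ?thesis using zfs eq by blast
qed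

end
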